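(* Let $(X,(\cdot,\cdot|\cdot))$ be a 2-inner product space over $\mathbb{K}\in\{\mathbb{R},\mathbb{C}\}$, let $n$ be a positive integer, let $x,y_1,\dots,y_n,z\in X$, and let $p>1$, $q$ with $\frac1p+\frac1q=1$. Then \[ \sum_{i=1}^{n}\left|(x,y_i|z)\right|^2\le \|x|z\|\Big(\sum_{i=1}^n\left|(x,y_i|z)\right|^{2p}\Big)^{\frac{1}{2p}}\left\{\Big(\sum_{i=1}^n\|y_i|z\|^{2q}\Big)^{\frac1q}+(n-1)^{\frac1p}\Big(\sum_{1\le i\ne j\le n}\left|(y_i,y_j|z)\right|^{q}\Big)^{\frac1q}\right\}^{1/2}. \]
   Context: A 2-inner product on a linear space $X$ of dimension greater than $1$ over $\mathbb{K}$ ($\mathbb{K}=\mathbb{R}$ or $\mathbb{C}$) is a function $(\cdot,\cdot|\cdot):X\times X\times X\to\mathbb{K}$ such that for all $x,x',y,z\in X$ and $\alpha\in\mathbb{K}$: (i) $(x,x|z)\ge 0$, and $(x,x|z)=0$ iff $x$ and $z$ are linearly dependent; (ii) $(x,x|z)=(z,z|x)$; (iii) $(y,x|z)=\overline{(x,y|z)}$; (iv) $(\alpha x,y|z)=\alpha(x,y|z)$; (v) $(x+x',y|z)=(x,y|z)+(x',y|z)$. The associated 2-norm is $\|x|z\|=\sqrt{(x,x|z)}$. The sum $\sum_{1\le i\ne j\le n}$ runs over all ordered pairs $(i,j)$ with $i\ne j$. *)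

theory Defs
  imports "HOL-Analysis.Analysis"
begin

definition lin_dep2_R :: "'a::real_vector \<Rightarrow> 'a \<Rightarrow> bool" where
  "lin_dep2_R x z \<longleftrightarrow> (\<exists>a b::real. (a \<noteq> 0 \<or> b \<noteq> 0) \<and> a *\<^sub>R x + b *\<^sub>R z = 0)"

definition lin_dep2_C :: "(complex \<Rightarrow> 'a::ab_group_add \<Rightarrow> 'a) \<Rightarrow> 'a \<Rightarrow> 'a \<Rightarrow> bool" where
  "lin_dep2_C sc x z \<longleftrightarrow> (\<exists>a b::complex. (a \<noteq> 0 \<or> b \<noteq> 0) \<and> sc a x + sc b z = 0)"

definition two_inner_R :: "('a::real_vector \<Rightarrow> 'a \<Rightarrow> 'a \<Rightarrow> real) \<Rightarrow> bool" where
  "two_inner_R ip \<longleftrightarrow>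
     (\<exists>u v::'a. \<not> lin_dep2_R u v) \<and>
     (\<forall>x z. ip x x z \<ge> 0 \<and> (ip x x z = 0 \<longleftrightarrow> lin_dep2_R x z)) \<and>
     (\<forall>x z. ip x x z = ip z z x) \<and>
     (\<forall>x y z. ip y x z = ip x y z) \<and>
     (\<forall>\<alpha> x y z. ip (\<alpha> *\<^sub>R x) y z = \<alpha> * ip x y z) \<and>
     (\<forall>x x' y z. ip (x + x') y z = ip x y z + ip x' y z)"

definition two_inner_C :: "(complex \<Rightarrow> 'a::ab_group_add \<Rightarrow> 'a) \<Rightarrow> ('a \<Rightarrow> 'a \<Rightarrow> 'a \<Rightarrow> complex) \<Rightarrow> bool" where
  "two_inner_C sc ip \<longleftrightarrow> vector_space sc \<and>
     (\<exists>u v::'a. \<not> lin_dep2_C sc u v) \<and>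
     (\<forall>x z. ip x x z \<in> \<real> \<and> Re (ip x x z) \<ge> 0 \<and> (ip x x z = 0 \<longleftrightarrow> lin_dep2_C sc x z)) \<and>
     (\<forall>x z. ip x x z = ip z z x) \<and>
     (\<forall>x y z. ip y x z = cnj (ip x y z)) \<and>
     (\<forall>\<alpha> x y z. ip (sc \<alpha> x) y z = \<alpha> * ip x y z) \<and>
     (\<forall>x x' y z. ip (x + x') y z = ip x y z + ip x' y z)"

definition two_norm_R :: "('a \<Rightarrow> 'a \<Rightarrow> 'a \<Rightarrow> real) \<Rightarrow> 'a \<Rightarrow> 'a \<Rightarrow> real" where
  "two_norm_R ip x z = sqrt (ip x x z)"

definition two_norm_C :: "('a \<Rightarrow> 'a \<Rightarrow> 'a \<Rightarrow> complex) \<Rightarrow> 'a \<Rightarrow> 'a \<Rightarrow> real" where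
  "two_norm_C ip x z = sqrt (Re (ip x x z))"

definition offdiag :: "nat \<Rightarrow> (nat \<times> nat) set" where
  "offdiag n = {(i, j). i \<in> {1..n} \<and> j \<in> {1..n} \<and> i \<noteq> j}"

end

theory Submission
  imports Defs
begin


lemma holder_sum:
  fixes f g :: "'i \<Rightarrow> real"
  assumes fin: "finite I" and f0: "\<And>i. f i \<ge> 0" and g0: "\<And>i. g i \<ge> 0"
    and p: "p > 1" and q: "q > 1" and pq: "1/p + 1/q = 1"
  shows "(\<Sum>i\<in>I. f i * g i) \<le> (\<Sum>i\<in>I. f i powr p) powr (1/p) * (\<Sum>i\<in>I. g i powr q) powr (1/q)"
proof -
  define A where "A = (\<Sum>i\<in>I. f i powr p)"
  define B where "B = (\<Sum>i\<in>I. g i powr q)"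
  have A0: "A \<ge> 0" unfolding A_def by (intro sum_nonneg) auto
  have B0: "B \<ge> 0" unfolding B_def by (intro sum_nonneg) auto
  show ?thesis
  proof (cases "A = 0 \<or> B = 0")
    case True
    then have "\<forall>i\<in>I. f i = 0 \<or> g i = 0"
      unfolding A_def B_def using fin f0 g0
      by (subst (asm) sum_nonneg_eq_0_iff; auto)+
    then have "(\<Sum>i\<in>I. f i * g i) = 0" by (intro sum.neutral) auto
    then show ?thesis using A0 B0 by (simp add: A_def[symmetric] B_def[symmetric])
  next
    case False
    with A0 B0 have Ap: "A > 0" and Bp: "B > 0" by auto
    define a where "a = A powr (1/p)"
    define b where "b = B powr (1/q)"
    have ap: "a > 0" and bp: "b > 0" using Ap Bp by (auto simp: a_def b_def)
    have apow: "a powr p = A" using Ap p by (simp add: a_def powr_powr)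
    have bpow: "b powr q = B" using Bp q by (simp add: b_def powr_powr)
    have "f i / a * (g i / b) \<le> f i powr p / (A * p) + g i powr q / (B * q)" for i
    proof -
      have "f i / a * (g i / b) \<le> (f i / a) powr p / p + (g i / b) powr q / q"
        using Youngs_inequality[OF p q pq, of "f i / a" "g i / b"] f0 g0 ap bp by auto
      also have "\<dots> = f i powr p / (A * p) + g i powr q / (B * q)"
        using f0 g0 ap bp by (simp add: powr_divide apow bpow)
      finally show ?thesis .
    qed
    then have "(\<Sum>i\<in>I. f i / a * (g i / b)) \<le> (\<Sum>i\<in>I. f i powr p / (A * p) + g i powr q / (B * q))"
      by (intro sum_mono) auto
    also have "\<dots> = A / (A * p) + B / (B * q)"
      by (simp add: sum.distrib sum_divide_distrib[symmetric] A_def B_def)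
    also have "\<dots> = 1" using Ap Bp pq by simp
    finally have "(\<Sum>i\<in>I. f i * g i) / (a * b) \<le> 1"
      by (simp add: sum_divide_distrib[symmetric] field_simps)
    then show ?thesis using ap bp by (simp add: a_def b_def A_def B_def field_simps)
  qed
qed

lemma diag_split:
  fixes f :: "nat \<Rightarrow> nat \<Rightarrow> 'c::comm_monoid_add"
  shows "(\<Sum>i=1..n. \<Sum>j=1..n. f i j) = (\<Sum>i=1..n. f i i) + (\<Sum>(i,j)\<in>offdiag n. f i j)"
proof -
  have off: "offdiag n = Sigma {1..n} (\<lambda>i. {1..n} - {i})"
    unfolding offdiag_def by auto
  have "(\<Sum>i=1..n. \<Sum>j=1..n. f i j) = (\<Sum>i=1..n. f i i + (\<Sum>j\<in>{1..n} - {i}. f i j))"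
  proof (intro sum.cong refl)
    fix i assume "i \<in> {1..n}"
    then show "(\<Sum>j=1..n. f i j) = f i i + (\<Sum>j\<in>{1..n} - {i}. f i j)"
      by (subst sum.remove[of _ i]) auto
  qed
  also have "\<dots> = (\<Sum>i=1..n. f i i) + (\<Sum>i=1..n. \<Sum>j\<in>{1..n} - {i}. f i j)"
    by (simp add: sum.distrib)
  also have "(\<Sum>i=1..n. \<Sum>j\<in>{1..n} - {i}. f i j) = (\<Sum>(i,j)\<in>offdiag n. f i j)"
    unfolding off by (subst sum.Sigma) auto
  finally show ?thesis .
qed

lemma offdiag_bound:
  fixes b :: "nat \<Rightarrow> real"
  shows "(\<Sum>(i,j)\<in>offdiag n. b i * b j) \<le> (real n - 1) * (\<Sum>i=1..n. (b i)^2)"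
proof -
  have "(\<Sum>i=1..n. b i)^2 = (\<Sum>i=1..n. \<Sum>j=1..n. b i * b j)"
    by (simp add: power2_eq_square sum_product)
  also have "\<dots> = (\<Sum>i=1..n. (b i)^2) + (\<Sum>(i,j)\<in>offdiag n. b i * b j)"
    by (subst diag_split) (simp add: power2_eq_square)
  finally have e: "(\<Sum>(i,j)\<in>offdiag n. b i * b j) = (\<Sum>i=1..n. b i)^2 - (\<Sum>i=1..n. (b i)^2)" by simp
  have "(\<Sum>i=1..n. 1 * b i)^2 \<le> (\<Sum>i=1..n. 1\<^sup>2) * (\<Sum>i=1..n. (b i)^2)"
    by (rule Cauchy_Schwarz_ineq_sum)
  then have "(\<Sum>i=1..n. b i)^2 \<le> real n * (\<Sum>i=1..n. (b i)^2)" by simp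
  then show ?thesis unfolding e by (simp add: algebra_simps)
qed

lemma sq_powr: assumes "(a::real) \<ge> 0" shows "(a^2) powr p = a powr (2*p)"
proof (cases "a = 0")
  case False
  then have "a^2 = a powr 2" using powr_realpow[of a 2] assms by simp
  then show ?thesis using False by (simp add: powr_powr)
qed simp


lemma stepB:
  fixes a d :: "nat \<Rightarrow> real" and e :: "nat \<Rightarrow> nat \<Rightarrow> real"
  assumes a0: "\<And>i. a i \<ge> 0" and d0: "\<And>i. d i \<ge> 0" and e0: "\<And>i j. e i j \<ge> 0"
    and p: "p > 1" and q: "q > 1" and pq: "1/p + 1/q = 1" and n: "n \<ge> 1"
  shows "(\<Sum>i=1..n. (a i)^2 * d i) + (\<Sum>(i,j)\<in>offdiag n. a i * a j * e i j)
     \<le> (\<Sum>i=1..n. a i powr (2*p)) powr (1/p) * ((\<Sum>i=1..n. d i powr q) powr (1/q)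
         + (real n - 1) powr (1/p) * (\<Sum>(i,j)\<in>offdiag n. e i j powr q) powr (1/q))"
proof -
  define A where "A = (\<Sum>i=1..n. a i powr (2*p))"
  define E where "E = (\<Sum>(i,j)\<in>offdiag n. e i j powr q) powr (1/q)"
  have finoff: "finite (offdiag n)" unfolding offdiag_def
    by (rule finite_subset[of _ "{1..n} \<times> {1..n}"]) auto
  have A0: "A \<ge> 0" unfolding A_def by (intro sum_nonneg) auto
  have E0: "E \<ge> 0" unfolding E_def by simp
  have h1: "(\<Sum>i=1..n. (a i)^2 * d i) \<le> A powr (1/p) * (\<Sum>i=1..n. d i powr q) powr (1/q)"
    using holder_sum[of "{1..n}" "\<lambda>i. (a i)^2" d p q] a0 d0 p q pq
    by (simp add: A_def sq_powr)
  have H: "(\<Sum>(i,j)\<in>offdiag n. a i * a j * e i j)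
      \<le> (\<Sum>k\<in>offdiag n. (a (fst k) * a (snd k)) powr p) powr (1/p) * (\<Sum>k\<in>offdiag n. e (fst k) (snd k) powr q) powr (1/q)"
    using holder_sum[OF finoff, of "\<lambda>k. a (fst k) * a (snd k)" "\<lambda>k. e (fst k) (snd k)" p q] a0 e0 p q pq
    unfolding split_def by simp
  have HE: "(\<Sum>k\<in>offdiag n. e (fst k) (snd k) powr q) powr (1/q) = E"
    unfolding E_def split_def ..
  have X1: "(\<Sum>k\<in>offdiag n. (a (fst k) * a (snd k)) powr p) = (\<Sum>(i,j)\<in>offdiag n. a i powr p * a j powr p)"
    unfolding split_def using a0 by (intro sum.cong refl) (simp add: powr_mult)
  have X2: "(\<Sum>(i,j)\<in>offdiag n. a i powr p * a j powr p) \<le> (real n - 1) * (\<Sum>i=1..n. (a i powr p)^2)"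
    by (rule offdiag_bound)
  have X3: "(\<Sum>i=1..n. (a i powr p)^2) = A"
    unfolding A_def
  proof (intro sum.cong refl)
    fix i
    have "(2::real)*p = p+p" by simp
    then show "(a i powr p)^2 = a i powr (2*p)" by (simp only: powr_add power2_eq_square)
  qed
  have X4: "(\<Sum>k\<in>offdiag n. (a (fst k) * a (snd k)) powr p) powr (1/p) \<le> ((real n - 1) * A) powr (1/p)"
    using X1 X2 X3 p by (intro powr_mono2) (auto intro!: sum_nonneg)
  have h2: "(\<Sum>(i,j)\<in>offdiag n. a i * a j * e i j) \<le> ((real n - 1) * A) powr (1/p) * E"
    using H HE X4 E0 by (meson mult_right_mono order_trans)
  have "((real n - 1) * A) powr (1/p) = (real n - 1) powr (1/p) * A powr (1/p)"
    using n A0 by (simp add: powr_mult)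
  then have "A powr (1/p) * ((\<Sum>i=1..n. d i powr q) powr (1/q) + (real n - 1) powr (1/p) * E)
     = A powr (1/p) * (\<Sum>i=1..n. d i powr q) powr (1/q) + ((real n - 1) * A) powr (1/p) * E"
    by (simp add: algebra_simps)
  with h1 h2 show ?thesis unfolding A_def[symmetric] E_def[symmetric]
    by linarith
qed

lemma stepC:
  fixes S N W A K :: real
  assumes "S \<ge> 0" "S^2 \<le> N * W" "W \<le> A powr (1/p) * K" "N \<ge> 0" "A \<ge> 0" "K \<ge> 0" "p > 0"
  shows "S \<le> sqrt N * A powr (1/(2*p)) * sqrt K"
proof -
  have "S = sqrt (S^2)" using assms by simp
  also have "\<dots> \<le> sqrt (N * (A powr (1/p) * K))"
    using assms by (intro real_sqrt_le_mono order_trans[OF assms(2)] mult_left_mono) auto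
  also have "\<dots> = sqrt N * sqrt (A powr (1/p)) * sqrt K" by (simp add: real_sqrt_mult)
  also have "sqrt (A powr (1/p)) = A powr (1/(2*p))"
    using assms by (simp add: powr_half_sqrt[symmetric] powr_powr mult.commute)
  finally show ?thesis .
qed



lemma quad_lemma:
  fixes N T W :: real
  assumes H: "\<And>r. 0 \<le> N - 2*r*T + r^2*T*W" and T: "T \<ge> 0" and W: "W \<ge> 0"
  shows "T \<le> N * W"
proof (cases "W = 0")
  case True
  show ?thesis
  proof (rule ccontr)
    assume "\<not> ?thesis"
    with True have Tp: "T > 0" by simp
    have "0 \<le> N - 2*((N+1)/(2*T))*T" using H[of "(N+1)/(2*T)"] True by simp
    also have "\<dots> = -1" using Tp by (simp add: field_simps)
    finally show False by simp
  qed
next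
  case False
  with W have Wp: "W > 0" by simp
  have "0 \<le> N - 2*(1/W)*T + (1/W)^2*T*W" by (rule H)
  also have "\<dots> = N - T/W" using Wp by (simp add: field_simps power2_eq_square)
  finally have "T/W \<le> N" by simp
  then show ?thesis using Wp by (simp add: field_simps mult.commute)
qed

context
  fixes sc :: "complex \<Rightarrow> 'b::ab_group_add \<Rightarrow> 'b" and ip :: "'b \<Rightarrow> 'b \<Rightarrow> 'b \<Rightarrow> complex"
  assumes H: "two_inner_C sc ip"
begin

lemma C_add1: "ip (a + b) y z = ip a y z + ip b y z"
  using H unfolding two_inner_C_def by blast
lemma C_sc1: "ip (sc \<alpha> a) y z = \<alpha> * ip a y z"
  using H unfolding two_inner_C_def by blast
lemma C_herm: "ip y x z = cnj (ip x y z)"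
  using H unfolding two_inner_C_def by blast
lemma C_real: "ip x x z = complex_of_real (Re (ip x x z))"
  using H unfolding two_inner_C_def by (metis Reals_cases Re_complex_of_real)
lemma C_pos: "Re (ip x x z) \<ge> 0"
  using H unfolding two_inner_C_def by blast
lemma C_add2: "ip x (a + b) z = ip x a z + ip x b z"
  by (metis C_herm C_add1 complex_cnj_add)
lemma C_sc2: "ip x (sc \<alpha> a) z = cnj \<alpha> * ip x a z"
  by (metis C_herm C_sc1 complex_cnj_mult)
lemma C_zero1: "ip 0 y z = 0"
  using C_add1[of 0 0 y z] by simp
lemma C_sum1: "ip (\<Sum>i\<in>I. sc (c i) (v i)) y z = (\<Sum>i\<in>I. c i * ip (v i) y z)"
proof (induction I rule: infinite_finite_induct)
  case (infinite A) then show ?case by (simp add: C_zero1)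
next
  case empty then show ?case by (simp add: C_zero1)
next
  case (insert a A) then show ?case by (simp add: C_add1 C_sc1)
qed
lemma C_sum2: "ip y (\<Sum>i\<in>I. sc (c i) (v i)) z = (\<Sum>i\<in>I. cnj (c i) * ip y (v i) z)"
  by (subst C_herm) (simp add: C_sum1 C_herm[of y])

lemma C_CS: "(cmod (ip x w z))^2 \<le> Re (ip x x z) * Re (ip w w z)"
proof -
  define t where "t = ip x w z"
  define N where "N = Re (ip x x z)"
  define W where "W = Re (ip w w z)"
  have "0 \<le> N - 2*r*(cmod t)^2 + r^2*(cmod t)^2*W" for r
  proof -
    define l where "l = - (complex_of_real r * t)"
    have e1: "ip (x + sc l w) (x + sc l w) z = ip x x z + cnj l * t + l * cnj t + l * cnj l * ip w w z"
      by (simp add: C_add1 C_add2 C_sc1 C_sc2 t_def C_herm[of w x] algebra_simps)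
    have tc: "t * cnj t = complex_of_real ((cmod t)^2)"
      by (rule complex_norm_square[symmetric])
    have "ip x x z + cnj l * t + l * cnj t + l * cnj l * ip w w z
        = complex_of_real N + cnj l * t + l * cnj t + l * cnj l * complex_of_real W"
      using C_real[of x z] C_real[of w z] by (simp add: N_def W_def)
    also have "\<dots> = complex_of_real N - 2 * complex_of_real r * (t * cnj t)
        + (complex_of_real r)^2 * (t * cnj t) * complex_of_real W"
      by (simp add: l_def algebra_simps power2_eq_square)
    also have "\<dots> = complex_of_real (N - 2*r*(cmod t)^2 + r^2*(cmod t)^2*W)"
      unfolding tc by simp
    finally have e: "Re (ip (x + sc l w) (x + sc l w) z) = N - 2*r*(cmod t)^2 + r^2*(cmod t)^2*W"
      unfolding e1 by simp
    show ?thesis using C_pos[of "x + sc l w" z] e by simp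
  qed
  then have "(cmod t)^2 \<le> N * W"
    by (rule quad_lemma) (auto simp: W_def C_pos)
  then show ?thesis by (simp add: t_def N_def W_def)
qed

end

lemma q_gt1: "p > 1 \<Longrightarrow> 1/p + 1/q = 1 \<Longrightarrow> (q::real) > 1"
proof -
  assume p: "p > 1" and pq: "1/p + 1/q = 1"
  have "1/q = 1 - 1/p" using pq by simp
  moreover have "0 < 1/p" "1/p < 1" using p by auto
  ultimately have "0 < 1/q" "1/q < 1" by auto
  then show "q > 1" by (smt (verit) divide_less_eq_1 zero_less_divide_1_iff)
qed

lemma sqrt_powr2: "(d::real) \<ge> 0 \<Longrightarrow> sqrt d powr (2*q) = d powr q"
  by (simp add: powr_half_sqrt[symmetric] powr_powr)

context
  fixes sc :: "complex \<Rightarrow> 'b::ab_group_add \<Rightarrow> 'b" and ip :: "'b \<Rightarrow> 'b \<Rightarrow> 'b \<Rightarrow> complex"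
  assumes H: "two_inner_C sc ip"
begin

lemma C_main:
  assumes n: "n \<ge> 1" and p: "p > 1" and pq: "1/p + 1/q = 1"
  shows "(\<Sum>i=1..n. cmod (ip x (y i) z) ^ 2)
        \<le> two_norm_C ip x z
           * (\<Sum>i=1..n. cmod (ip x (y i) z) powr (2 * p)) powr (1 / (2 * p))
           * sqrt ((\<Sum>i=1..n. two_norm_C ip (y i) z powr (2 * q)) powr (1 / q)
                   + (real n - 1) powr (1 / p)
                     * (\<Sum>(i, j)\<in>offdiag n. cmod (ip (y i) (y j) z) powr q) powr (1 / q))"
proof -
  have q: "q > 1" using q_gt1[OF p pq] .
  define c where "c i = ip x (y i) z" for i
  define a where "a i = cmod (c i)" for i
  define G where "G i j = ip (y i) (y j) z" for i j
  define d where "d i = Re (G i i)" for i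
  define e where "e i j = cmod (G i j)" for i j
  define w where "w = (\<Sum>i\<in>{1..n}. sc (c i) (y i))"
  define S where "S = (\<Sum>i=1..n. (a i)^2)"
  define N where "N = Re (ip x x z)"
  define W where "W = Re (ip w w z)"
  define A where "A = (\<Sum>i=1..n. a i powr (2*p))"
  define K where "K = (\<Sum>i=1..n. d i powr q) powr (1/q)
         + (real n - 1) powr (1/p) * (\<Sum>(i,j)\<in>offdiag n. e i j powr q) powr (1/q)"
  have d0: "d i \<ge> 0" for i unfolding d_def G_def using C_pos[OF H] .
  have S0: "S \<ge> 0" unfolding S_def by (intro sum_nonneg) auto
  have xw: "ip x w z = complex_of_real S"
  proof -
    have "ip x w z = (\<Sum>i=1..n. cnj (c i) * c i)"
      unfolding w_def by (simp add: C_sum2[OF H] c_def)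
    also have "\<dots> = (\<Sum>i=1..n. complex_of_real ((a i)^2))"
      by (intro sum.cong refl) (simp add: a_def mult.commute flip: complex_norm_square)
    finally show ?thesis by (simp add: S_def)
  qed
  have ww: "ip w w z = (\<Sum>i=1..n. \<Sum>j=1..n. c i * cnj (c j) * G i j)"
    unfolding w_def C_sum1[OF H] C_sum2[OF H] G_def by (simp add: sum_distrib_left mult.assoc, subst sum.swap, simp add: mult.left_commute)
  have "W = (\<Sum>i=1..n. \<Sum>j=1..n. Re (c i * cnj (c j) * G i j))"
    unfolding W_def ww by (simp add: Re_sum)
  also have "\<dots> \<le> (\<Sum>i=1..n. \<Sum>j=1..n. a i * a j * e i j)"
    by (intro sum_mono) (metis a_def e_def complex_Re_le_cmod norm_mult complex_mod_cnj)
  also have "\<dots> = (\<Sum>i=1..n. (a i)^2 * d i) + (\<Sum>(i,j)\<in>offdiag n. a i * a j * e i j)"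
  proof -
    have "e i i = d i" for i
    proof -
      have "G i i = complex_of_real (d i)" unfolding G_def d_def by (rule C_real[OF H])
      then show ?thesis using d0[of i] by (simp add: e_def)
    qed
    then show ?thesis by (subst diag_split) (simp add: power2_eq_square)
  qed
  also have "\<dots> \<le> A powr (1/p) * K"
    unfolding A_def K_def
    by (rule stepB) (use n in \<open>auto simp: a_def e_def d0 p q pq\<close>)
  finally have WK: "W \<le> A powr (1/p) * K" .
  have SNW: "S^2 \<le> N * W"
    using C_CS[OF H, of x w z] xw S0 by (simp add: N_def W_def)
  have K0: "K \<ge> 0" unfolding K_def using n by (intro add_nonneg_nonneg mult_nonneg_nonneg) auto
  have A0: "A \<ge> 0" unfolding A_def by (intro sum_nonneg) auto
  have N0: "N \<ge> 0" unfolding N_def by (rule C_pos[OF H])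
  have fin: "S \<le> sqrt N * A powr (1/(2*p)) * sqrt K"
    by (rule stepC[OF S0 SNW WK N0 A0 K0]) (use p in simp)
  have K': "K = (\<Sum>i=1..n. two_norm_C ip (y i) z powr (2 * q)) powr (1 / q)
                   + (real n - 1) powr (1 / p)
                     * (\<Sum>(i, j)\<in>offdiag n. cmod (ip (y i) (y j) z) powr q) powr (1 / q)"
    unfolding K_def two_norm_C_def using d0 by (simp add: sqrt_powr2 d_def G_def e_def)
  show ?thesis using fin unfolding K' by (simp add: S_def a_def c_def A_def two_norm_C_def N_def)
qed

end

context
  fixes ip :: "'a::real_vector \<Rightarrow> 'a \<Rightarrow> 'a \<Rightarrow> real"
  assumes H: "two_inner_R ip"
begin

lemma R_add1: "ip (a + b) y z = ip a y z + ip b y z"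
  using H unfolding two_inner_R_def by blast
lemma R_sc1: "ip (\<alpha> *\<^sub>R a) y z = \<alpha> * ip a y z"
  using H unfolding two_inner_R_def by blast
lemma R_sym: "ip y x z = ip x y z"
  using H unfolding two_inner_R_def by blast
lemma R_pos: "ip x x z \<ge> 0"
  using H unfolding two_inner_R_def by blast
lemma R_add2: "ip x (a + b) z = ip x a z + ip x b z"
  by (metis R_sym R_add1)
lemma R_sc2: "ip x (\<alpha> *\<^sub>R a) z = \<alpha> * ip x a z"
  by (metis R_sym R_sc1)
lemma R_zero1: "ip 0 y z = 0"
  using R_add1[of 0 0 y z] by simp
lemma R_sum1: "ip (\<Sum>i\<in>I. c i *\<^sub>R v i) y z = (\<Sum>i\<in>I. c i * ip (v i) y z)"
proof (induction I rule: infinite_finite_induct)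
  case (infinite A) then show ?case by (simp add: R_zero1)
next
  case empty then show ?case by (simp add: R_zero1)
next
  case (insert a A) then show ?case by (simp add: R_add1 R_sc1)
qed
lemma R_sum2: "ip y (\<Sum>i\<in>I. c i *\<^sub>R v i) z = (\<Sum>i\<in>I. c i * ip y (v i) z)"
  by (subst R_sym) (simp add: R_sum1 R_sym[of y])

lemma R_CS: "(ip x w z)^2 \<le> ip x x z * ip w w z"
proof -
  define t where "t = ip x w z"
  define N where "N = ip x x z"
  define W where "W = ip w w z"
  have "0 \<le> N - 2*r*t^2 + r^2*t^2*W" for r
  proof -
    define l where "l = - (r*t)"
    have "ip (x + l *\<^sub>R w) (x + l *\<^sub>R w) z = N + 2*l*t + l*l*W"
      unfolding R_add1 R_add2 R_sc1 R_sc2 t_def N_def W_def R_sym[of w x] by (simp add: algebra_simps)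
    also have "\<dots> = N - 2*r*t^2 + r^2*t^2*W" by (simp add: l_def algebra_simps power2_eq_square)
    finally show ?thesis using R_pos[of "x + l *\<^sub>R w" z] by simp
  qed
  then have "t^2 \<le> N * W"
    by (rule quad_lemma) (auto simp: W_def R_pos)
  then show ?thesis by (simp add: t_def N_def W_def)
qed

lemma R_main:
  assumes n: "n \<ge> 1" and p: "p > 1" and pq: "1/p + 1/q = 1"
  shows "(\<Sum>i=1..n. \<bar>ip x (y i) z\<bar> ^ 2)
        \<le> two_norm_R ip x z
           * (\<Sum>i=1..n. \<bar>ip x (y i) z\<bar> powr (2 * p)) powr (1 / (2 * p))
           * sqrt ((\<Sum>i=1..n. two_norm_R ip (y i) z powr (2 * q)) powr (1 / q)
                   + (real n - 1) powr (1 / p)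
                     * (\<Sum>(i, j)\<in>offdiag n. \<bar>ip (y i) (y j) z\<bar> powr q) powr (1 / q))"
proof -
  have q: "q > 1" using q_gt1[OF p pq] .
  define c where "c i = ip x (y i) z" for i
  define a where "a i = \<bar>c i\<bar>" for i
  define G where "G i j = ip (y i) (y j) z" for i j
  define d where "d i = G i i" for i
  define e where "e i j = \<bar>G i j\<bar>" for i j
  define w where "w = (\<Sum>i\<in>{1..n}. c i *\<^sub>R y i)"
  define S where "S = (\<Sum>i=1..n. (a i)^2)"
  define N where "N = ip x x z"
  define W where "W = ip w w z"
  define A where "A = (\<Sum>i=1..n. a i powr (2*p))"
  define K where "K = (\<Sum>i=1..n. d i powr q) powr (1/q)
         + (real n - 1) powr (1/p) * (\<Sum>(i,j)\<in>offdiag n. e i j powr q) powr (1/q)"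
  have d0: "d i \<ge> 0" for i unfolding d_def G_def using R_pos .
  have S0: "S \<ge> 0" unfolding S_def by (intro sum_nonneg) auto
  have xw: "ip x w z = S"
    unfolding w_def S_def a_def by (simp add: R_sum2 c_def power2_eq_square)
  have ww: "ip w w z = (\<Sum>i=1..n. \<Sum>j=1..n. c i * c j * G i j)"
    unfolding w_def R_sum1 R_sum2 G_def by (simp add: sum_distrib_left mult.assoc, subst sum.swap, simp add: mult.left_commute)
  have "W = (\<Sum>i=1..n. \<Sum>j=1..n. c i * c j * G i j)"
    unfolding W_def ww ..
  also have "\<dots> \<le> (\<Sum>i=1..n. \<Sum>j=1..n. a i * a j * e i j)"
    by (intro sum_mono) (simp add: a_def e_def abs_mult[symmetric])
  also have "\<dots> = (\<Sum>i=1..n. (a i)^2 * d i) + (\<Sum>(i,j)\<in>offdiag n. a i * a j * e i j)"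
  proof -
    have "e i i = d i" for i using d0[of i] by (simp add: e_def d_def)
    then show ?thesis by (subst diag_split) (simp add: power2_eq_square)
  qed
  also have "\<dots> \<le> A powr (1/p) * K"
    unfolding A_def K_def
    by (rule stepB) (use n in \<open>auto simp: a_def e_def d0 p q pq\<close>)
  finally have WK: "W \<le> A powr (1/p) * K" .
  have SNW: "S^2 \<le> N * W"
    using R_CS[of x w z] xw by (simp add: N_def W_def)
  have K0: "K \<ge> 0" unfolding K_def using n by (intro add_nonneg_nonneg mult_nonneg_nonneg) auto
  have A0: "A \<ge> 0" unfolding A_def by (intro sum_nonneg) auto
  have N0: "N \<ge> 0" unfolding N_def by (rule R_pos)
  have fin: "S \<le> sqrt N * A powr (1/(2*p)) * sqrt K"
    by (rule stepC[OF S0 SNW WK N0 A0 K0]) (use p in simp)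
  have K': "K = (\<Sum>i=1..n. two_norm_R ip (y i) z powr (2 * q)) powr (1 / q)
                   + (real n - 1) powr (1 / p)
                     * (\<Sum>(i, j)\<in>offdiag n. \<bar>ip (y i) (y j) z\<bar> powr q) powr (1 / q)"
    unfolding K_def two_norm_R_def using d0 by (simp add: sqrt_powr2 d_def G_def e_def)
  show ?thesis using fin unfolding K' by (simp add: S_def a_def c_def A_def two_norm_R_def N_def)
qed

end


theorem mainTheorem2:
  fixes dummyR :: "'a::real_vector" and dummyC :: "'b::ab_group_add"
  shows
  "(\<forall>(ip :: 'a \<Rightarrow> 'a \<Rightarrow> 'a \<Rightarrow> real) (n::nat) (x::'a) (y::nat \<Rightarrow> 'a) (z::'a) (p::real) (q::real).
      two_inner_R ip \<and> n \<ge> 1 \<and> p > 1 \<and> 1 / p + 1 / q = 1 \<longrightarrow>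
      (\<Sum>i=1..n. \<bar>ip x (y i) z\<bar> ^ 2)
        \<le> two_norm_R ip x z
           * (\<Sum>i=1..n. \<bar>ip x (y i) z\<bar> powr (2 * p)) powr (1 / (2 * p))
           * sqrt ((\<Sum>i=1..n. two_norm_R ip (y i) z powr (2 * q)) powr (1 / q)
                   + (real n - 1) powr (1 / p)
                     * (\<Sum>(i, j)\<in>offdiag n. \<bar>ip (y i) (y j) z\<bar> powr q) powr (1 / q)))
   \<and>
   (\<forall>(sc :: complex \<Rightarrow> 'b \<Rightarrow> 'b) (ip :: 'b \<Rightarrow> 'b \<Rightarrow> 'b \<Rightarrow> complex) (n::nat) (x::'b) (y::nat \<Rightarrow> 'b) (z::'b) (p::real) (q::real).
      two_inner_C sc ip \<and> n \<ge> 1 \<and> p > 1 \<and> 1 / p + 1 / q = 1 \<longrightarrow>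
      (\<Sum>i=1..n. cmod (ip x (y i) z) ^ 2)
        \<le> two_norm_C ip x z
           * (\<Sum>i=1..n. cmod (ip x (y i) z) powr (2 * p)) powr (1 / (2 * p))
           * sqrt ((\<Sum>i=1..n. two_norm_C ip (y i) z powr (2 * q)) powr (1 / q)
                   + (real n - 1) powr (1 / p)
                     * (\<Sum>(i, j)\<in>offdiag n. cmod (ip (y i) (y j) z) powr q) powr (1 / q)))"
proof (intro conjI allI impI)
  fix ip :: "'a \<Rightarrow> 'a \<Rightarrow> 'a \<Rightarrow> real" and n :: nat and x y z and p q :: real
  assume "two_inner_R ip \<and> n \<ge> 1 \<and> p > 1 \<and> 1 / p + 1 / q = 1"
  then show "(\<Sum>i=1..n. \<bar>ip x (y i) z\<bar> ^ 2)
        \<le> two_norm_R ip x z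
           * (\<Sum>i=1..n. \<bar>ip x (y i) z\<bar> powr (2 * p)) powr (1 / (2 * p))
           * sqrt ((\<Sum>i=1..n. two_norm_R ip (y i) z powr (2 * q)) powr (1 / q)
                   + (real n - 1) powr (1 / p)
                     * (\<Sum>(i, j)\<in>offdiag n. \<bar>ip (y i) (y j) z\<bar> powr q) powr (1 / q))"
    using R_main by blast
next
  fix sc :: "complex \<Rightarrow> 'b \<Rightarrow> 'b" and ip :: "'b \<Rightarrow> 'b \<Rightarrow> 'b \<Rightarrow> complex" and n :: nat and x y z and p q :: real
  assume "two_inner_C sc ip \<and> n \<ge> 1 \<and> p > 1 \<and> 1 / p + 1 / q = 1"
  then show "(\<Sum>i=1..n. cmod (ip x (y i) z) ^ 2)
        \<le> two_norm_C ip x z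
           * (\<Sum>i=1..n. cmod (ip x (y i) z) powr (2 * p)) powr (1 / (2 * p))
           * sqrt ((\<Sum>i=1..n. two_norm_C ip (y i) z powr (2 * q)) powr (1 / q)
                   + (real n - 1) powr (1 / p)
                     * (\<Sum>(i, j)\<in>offdiag n. cmod (ip (y i) (y j) z) powr q) powr (1 / q))"
    using C_main by blast
qed

end
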